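(* Let $0,1,\dots,5$ be points of $\mathbb{P}^3(\mathbb{C})$ with chosen representative vectors $v_0,\dots,v_5$, and assume $[0123]\neq 0$ (so the lines $01$ and $23$ are skew). Define the vectors $$p=[0125]v_3-[0135]v_2,\qquad q=-[0124]v_3-[0234]v_1,\qquad r=[1345]v_2-[2345]v_1,$$ which represent the intersection points $23\cap 015$, $13\cap 024$, $12\cap 345$ respectively (line meets plane). Then the polynomial identity $$-[v_1v_0v_2q]\,[v_0\,p\,v_3\,r]+[p\,v_0v_2q]\,[v_0v_1v_3r] \;=\; [0123]^2\big([0125][0234][1345]-[0124][2345][0135]\big)$$ holds. Consequently, if $p,q,r$ are nonzero (i.e. the plane $015$ does not contain the line $23$, the plane $024$ does not contain the line $13$, and the plane $345$ does not contain the line $12$), then the three lines joining $1$ to $\langle p\rangle$, $2$ to $\langle q\rangle$, and $3$ to $\langle r\rangle$ pass through a common point if and only if $[0125][0234][1345]-[0124][2345][0135]=0$.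
   Context: For vectors $a,b,c,d\in\mathbb{C}^4$, $[abcd]$ is the determinant of the $4\times4$ matrix with columns $a,b,c,d$; for point labels, $[ijkl]$ means $[v_iv_jv_kv_l]$. For a nonzero vector $v$, $\langle v\rangle$ denotes the corresponding point of $\mathbb{P}^3$. A line $ij$ is the line through points $i,j$; a plane $ijk$ is the plane through three non-collinear points. *)

theory Defs
  imports "HOL-Analysis.Analysis"
begin

definition det4 :: "complex^4 \<Rightarrow> complex^4 \<Rightarrow> complex^4 \<Rightarrow> complex^4 \<Rightarrow> complex" where
  "det4 a b c d = det (\<chi> i j. (if j = (1::4) then a else if j = 2 then b else if j = 3 then c else d) $ i)"

text \<open>The point with representative x lies on the projective line through the points
  with (linearly independent) representatives u and w, i.e. x is a C-linear combination of u, w.\<close>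
definition on_line :: "complex^4 \<Rightarrow> complex^4 \<Rightarrow> complex^4 \<Rightarrow> bool" where
  "on_line x u w \<longleftrightarrow> (\<exists>a b. x = a *s u + b *s w)"

definition concurrent3 ::
  "complex^4 \<Rightarrow> complex^4 \<Rightarrow> complex^4 \<Rightarrow> complex^4 \<Rightarrow> complex^4 \<Rightarrow> complex^4 \<Rightarrow> bool" where
  "concurrent3 u1 w1 u2 w2 u3 w3 \<longleftrightarrow>
     (\<exists>x. x \<noteq> 0 \<and> on_line x u1 w1 \<and> on_line x u2 w2 \<and> on_line x u3 w3)"

end

theory Submission imports Defs begin
definition G :: "complex^4 \<Rightarrow> complex^4 \<Rightarrow> complex^4 \<Rightarrow> complex^4 \<Rightarrow> 4 \<Rightarrow> complex^4" where
 "G a b c d = (\<lambda>i. if i = 1 then a else if i = 2 then b else if i = 3 then c else d)"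
lemma det4_G: "det4 a b c d = det (\<chi> i. G a b c d i)"
  unfolding det4_def G_def
  by (subst det_transpose[symmetric]) (rule arg_cong[where f=det], simp add: vec_eq_iff transpose_def)

lemma det_upd_lin:
  fixes g :: "'n::finite \<Rightarrow> complex^'n"
  shows "det (\<chi> i. (g(k := x *s u + y *s w)) i) = x * det (\<chi> i. (g(k:=u)) i) + y * det (\<chi> i. (g(k:=w)) i)"
proof -
  have "det (\<chi> i. (g(k := x *s u + y *s w)) i) = det (\<chi> i. if i = k then x *s u + y *s w else g i)"
    by simp
  also have "\<dots> = det (\<chi> i. if i = k then x *s u else g i) + det (\<chi> i. if i = k then y *s w else g i)"
    using det_row_add[of k "\<lambda>_. x *s u" "\<lambda>_. y *s w" g] by simp
  also have "\<dots> = x * det (\<chi> i. if i = k then u else g i) + y * det (\<chi> i. if i = k then w else g i)"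
    using det_row_mul[of k x "\<lambda>_. u" g] det_row_mul[of k y "\<lambda>_. w" g] by simp
  finally show ?thesis by (simp add: fun_upd_def)
qed

lemma det_upd_eq0:
  fixes g :: "'n::finite \<Rightarrow> complex^'n"
  assumes "i \<noteq> j" "g i = g j"
  shows "det (\<chi> k. g k) = 0"
  by (rule det_identical_rows[OF assms(1)]) (simp add: row_def assms)

lemma lin1: "det4 (x *s u + y *s w) b c d = x * det4 u b c d + y * det4 w b c d"
proof -
  have "G (x *s u + y *s w) b c d = (G a b c d)(1 := x *s u + y *s w)"
       "G u b c d = (G a b c d)(1 := u)" "G w b c d = (G a b c d)(1 := w)"
    by (auto simp: G_def fun_eq_iff)
  note eqs = this show ?thesis unfolding det4_G eqs by (rule det_upd_lin)
qed
lemma lin2: "det4 a (x *s u + y *s w) c d = x * det4 a u c d + y * det4 a w c d"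
proof -
  have "G a (x *s u + y *s w) c d = (G a b c d)(2 := x *s u + y *s w)"
       "G a u c d = (G a b c d)(2 := u)" "G a w c d = (G a b c d)(2 := w)"
    by (auto simp: G_def fun_eq_iff)
  note eqs = this show ?thesis unfolding det4_G eqs by (rule det_upd_lin)
qed
lemma lin3: "det4 a b (x *s u + y *s w) d = x * det4 a b u d + y * det4 a b w d"
proof -
  have "G a b (x *s u + y *s w) d = (G a b c d)(3 := x *s u + y *s w)"
       "G a b u d = (G a b c d)(3 := u)" "G a b w d = (G a b c d)(3 := w)"
    by (auto simp: G_def fun_eq_iff)
  note eqs = this show ?thesis unfolding det4_G eqs by (rule det_upd_lin)
qed
lemma lin4: "det4 a b c (x *s u + y *s w) = x * det4 a b c u + y * det4 a b c w"
proof -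
  have "G a b c (x *s u + y *s w) = (G a b c d)(4 := x *s u + y *s w)"
       "G a b c u = (G a b c d)(4 := u)" "G a b c w = (G a b c d)(4 := w)"
    by (auto simp: G_def fun_eq_iff) (metis exhaust_4)+
  note eqs = this show ?thesis unfolding det4_G eqs by (rule det_upd_lin)
qed

lemma eq0:
  "det4 a a c d = 0" "det4 a b a d = 0" "det4 a b c a = 0"
  "det4 a b b d = 0" "det4 a b c b = 0" "det4 a b c c = 0"
  unfolding det4_G
  by (rule det_upd_eq0[of 1 2] det_upd_eq0[of 1 3] det_upd_eq0[of 1 4]
      det_upd_eq0[of 2 3] det_upd_eq0[of 2 4] det_upd_eq0[of 3 4]; simp add: G_def)+

lemma add1: "det4 (u + w) b c d = det4 u b c d + det4 w b c d"
  using lin1[of 1 u 1 w] by simp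
lemma add2: "det4 a (u + w) c d = det4 a u c d + det4 a w c d"
  using lin2[of a 1 u 1 w] by simp
lemma add3: "det4 a b (u + w) d = det4 a b u d + det4 a b w d"
  using lin3[of a b 1 u 1 w] by simp
lemma add4: "det4 a b c (u + w) = det4 a b c u + det4 a b c w"
  using lin4[of a b c 1 u 1 w] by simp
lemma sm1: "det4 (x *s u) b c d = x * det4 u b c d"
  using lin1[of x u 0 u] by simp
lemma sm2: "det4 a (x *s u) c d = x * det4 a u c d"
  using lin2[of a x u 0 u] by simp
lemma sm3: "det4 a b (x *s u) d = x * det4 a b u d"
  using lin3[of a b x u 0 u] by simp
lemma sm4: "det4 a b c (x *s u) = x * det4 a b c u"
  using lin4[of a b c x u 0 u] by simp

lemmas det4_ml = add1 add2 add3 add4 sm1 sm2 sm3 sm4 eq0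

lemma sw12: "det4 b a c d = - det4 a b c d"
proof -
  have "det4 (a+b) (a+b) c d = det4 a a c d + det4 a b c d + (det4 b a c d + det4 b b c d)"
    by (simp only: add1 add2) (simp add: algebra_simps)
  then show ?thesis by (simp add: eq0 add_eq_0_iff)
qed
lemma sw23: "det4 a c b d = - det4 a b c d"
proof -
  have "det4 a (b+c) (b+c) d = det4 a b b d + det4 a b c d + (det4 a c b d + det4 a c c d)"
    by (simp only: add2 add3) (simp add: algebra_simps)
  then show ?thesis by (simp add: eq0 add_eq_0_iff)
qed
lemma sw34: "det4 a b d c = - det4 a b c d"
proof -
  have "det4 a b (c+d) (c+d) = det4 a b c c + det4 a b c d + (det4 a b d c + det4 a b d d)"
    by (simp only: add3 add4) (simp add: algebra_simps)
  then show ?thesis by (simp add: eq0 add_eq_0_iff)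
qed
lemma sc1:
  fixes a b c d e f s1 t1 t2 t3 :: complex
  assumes "s1 = -t2*d" "s1 = -t3*f" "-t1*b = t3*e" "t1*a = -t2*c"
    and "\<not>(s1=0 \<and> t1*b=0 \<and> t1*a = 0)"
  shows "a*d*e - c*f*b = 0"
proof -
  have "(a*d*e - c*f*b) * s1 = 0" "(a*d*e - c*f*b) * (t1*b) = 0" "(a*d*e - c*f*b) * (t1*a) = 0"
    using assms(1-4) by algebra+
  then show ?thesis using assms(5) by auto
qed
lemma sc2:
  fixes a b c d e f :: complex
  assumes "a \<noteq> 0 \<or> b \<noteq> 0" "c \<noteq> 0 \<or> d \<noteq> 0" "e \<noteq> 0 \<or> f \<noteq> 0" "a*d*e - c*f*b = 0"
  shows "\<exists>t1 t2 t3. t3*e = -t1*b \<and> t2*c = -t1*a \<and> t2*d = t3*f \<and> (t2*d \<noteq> 0 \<or> t1*b \<noteq> 0 \<or> t1*a \<noteq> 0)"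
proof (cases "c = 0")
  case True
  then have d: "d \<noteq> 0" using assms by auto
  show ?thesis
  proof (cases "a = 0")
    case True
    then have "b \<noteq> 0" using assms by auto
    then show ?thesis using assms(3) True \<open>c = 0\<close> d
      apply - apply (rule exI[of _ "-d*e/b"]) apply (rule exI[of _ f]) apply (rule exI[of _ d]) by (auto simp: field_simps)
  next
    case False
    then have "e = 0" using assms True d by auto
    then have "f \<noteq> 0" using assms by auto
    then show ?thesis using \<open>e = 0\<close> \<open>c = 0\<close> d
      apply - apply (rule exI[of _ "0::complex"]) apply (rule exI[of _ f]) apply (rule exI[of _ d]) by (auto simp: field_simps)
  qed
next
  case False
  show ?thesis
  proof (cases "e = 0")
    case True
    then have "f \<noteq> 0" using assms by auto
    then have "b = 0" using assms True False by auto
    then have "a \<noteq> 0" using assms by auto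
    then show ?thesis using True False \<open>b = 0\<close> \<open>f \<noteq> 0\<close>
      apply - apply (rule exI[of _ "1::complex"]) apply (rule exI[of _ "-a/c"]) apply (rule exI[of _ "-a*d/(c*f)"]) by (auto simp: field_simps)
  next
    case e: False
    have "a*d*e = c*f*b" using assms by simp
    then have "-(a*d/c) = -(b*f/e)" using e False by (auto simp: field_simps)
    then show ?thesis using e False assms(1)
      apply - apply (rule exI[of _ "1::complex"]) apply (rule exI[of _ "-a/c"]) apply (rule exI[of _ "-b/e"]) by (auto simp: field_simps)
  qed
qed

lemma indep:
  assumes D: "det4 v0 v1 v2 v3 \<noteq> 0"
    and eq: "\<alpha> *s v1 + \<beta> *s v2 + \<gamma> *s v3 = \<alpha>' *s v1 + \<beta>' *s v2 + \<gamma>' *s v3"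
  shows "\<alpha> = \<alpha>' \<and> \<beta> = \<beta>' \<and> \<gamma> = \<gamma>'"
proof -
  have "det4 v0 (\<alpha> *s v1 + \<beta> *s v2 + \<gamma> *s v3) v2 v3 = det4 v0 (\<alpha>' *s v1 + \<beta>' *s v2 + \<gamma>' *s v3) v2 v3"
    "det4 v0 v1 (\<alpha> *s v1 + \<beta> *s v2 + \<gamma> *s v3) v3 = det4 v0 v1 (\<alpha>' *s v1 + \<beta>' *s v2 + \<gamma>' *s v3) v3"
    "det4 v0 v1 v2 (\<alpha> *s v1 + \<beta> *s v2 + \<gamma> *s v3) = det4 v0 v1 v2 (\<alpha>' *s v1 + \<beta>' *s v2 + \<gamma>' *s v3)"
    using eq by simp_all
  then show ?thesis using D by (simp add: det4_ml)
qed

lemma part2: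
  assumes D: "det4 v0 v1 v2 v3 \<noteq> 0"
    and pf: "p = a *s v3 + (-b) *s v2" and qf: "q = (-c) *s v3 + (-d) *s v1"
    and rf: "r = e *s v2 + (-f) *s v1"
    and nz: "p \<noteq> 0" "q \<noteq> 0" "r \<noteq> 0"
  shows "concurrent3 v1 p v2 q v3 r \<longleftrightarrow> a*d*e - c*f*b = 0"
proof
  assume "concurrent3 v1 p v2 q v3 r"
  then obtain x s1 t1 s2 t2 s3 t3 where x: "x \<noteq> 0" "x = s1 *s v1 + t1 *s p"
     "x = s2 *s v2 + t2 *s q" "x = s3 *s v3 + t3 *s r"
    unfolding concurrent3_def on_line_def by blast
  have x1: "x = s1 *s v1 + (-t1*b) *s v2 + (t1*a) *s v3"
    using x(2) pf by (simp add: vec_eq_iff algebra_simps)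
  have x2: "x = (-t2*d) *s v1 + s2 *s v2 + (-t2*c) *s v3"
    using x(3) qf by (simp add: vec_eq_iff algebra_simps)
  have x3: "x = (-t3*f) *s v1 + (t3*e) *s v2 + s3 *s v3"
    using x(4) rf by (simp add: vec_eq_iff algebra_simps)
  have e12: "s1 = -t2*d \<and> -t1*b = s2 \<and> t1*a = -t2*c"
    by (rule indep[OF D]) (use x1 x2 in simp)
  have e13: "s1 = -t3*f \<and> -t1*b = t3*e \<and> t1*a = s3"
    by (rule indep[OF D]) (use x1 x3 in simp)
  have "\<not>(s1=0 \<and> t1*b=0 \<and> t1*a = 0)"
    using x(1) x1 by auto
  then show "a*d*e - c*f*b = 0"
    by (intro sc1[of s1 t2 d t3 f t1 b e a c]) (use e12 e13 in auto)
next
  assume det: "a*d*e - c*f*b = 0"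
  have "a \<noteq> 0 \<or> b \<noteq> 0" using nz(1) pf by auto
  moreover have "c \<noteq> 0 \<or> d \<noteq> 0" using nz(2) qf by auto
  moreover have "e \<noteq> 0 \<or> f \<noteq> 0" using nz(3) rf by auto
  ultimately obtain t1 t2 t3 where t: "t3*e = -t1*b" "t2*c = -t1*a" "t2*d = t3*f"
     "t2*d \<noteq> 0 \<or> t1*b \<noteq> 0 \<or> t1*a \<noteq> 0"
    using sc2[OF _ _ _ det] by blast
  define x where "x = (-t2*d) *s v1 + (-t1*b) *s v2 + (t1*a) *s v3"
  have "x \<noteq> 0"
  proof
    assume "x = 0"
    then have "(-t2*d) *s v1 + (-t1*b) *s v2 + (t1*a) *s v3 = 0 *s v1 + 0 *s v2 + 0 *s v3"
      unfolding x_def by simp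
    from indep[OF D this] t(4) show False by auto
  qed
  moreover have "on_line x v1 p"
    unfolding on_line_def x_def pf
    apply (rule exI[of _ "-t2*d"]) apply (rule exI[of _ t1])
    by (simp add: vec_eq_iff algebra_simps)
  moreover have "on_line x v2 q"
  proof -
    have "x = (-t2*d) *s v1 + (-t1*b) *s v2 + (-(t2*c)) *s v3"
      unfolding x_def using t(2) by simp
    then show ?thesis
      unfolding on_line_def qf
      apply - apply (rule exI[of _ "-t1*b"]) apply (rule exI[of _ t2])
      by (simp add: vec_eq_iff algebra_simps)
  qed
  moreover have "on_line x v3 r"
  proof -
    have "x = (-(t3*f)) *s v1 + (t3*e) *s v2 + (t1*a) *s v3"
      unfolding x_def using t(1,3) by simp
    then show ?thesis
      unfolding on_line_def rf
      apply - apply (rule exI[of _ "t1*a"]) apply (rule exI[of _ t3])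
      by (simp add: vec_eq_iff algebra_simps)
  qed
  ultimately show "concurrent3 v1 p v2 q v3 r"
    unfolding concurrent3_def by blast
qed

theorem lemma3p1:
  fixes v0 v1 v2 v3 v4 v5 p q r :: "complex^4"
  assumes nz: "v0 \<noteq> 0" "v1 \<noteq> 0" "v2 \<noteq> 0" "v3 \<noteq> 0" "v4 \<noteq> 0" "v5 \<noteq> 0"
    and skew: "det4 v0 v1 v2 v3 \<noteq> 0"
    and p_def: "p = det4 v0 v1 v2 v5 *s v3 - det4 v0 v1 v3 v5 *s v2"
    and q_def: "q = - (det4 v0 v1 v2 v4 *s v3) - det4 v0 v2 v3 v4 *s v1"
    and r_def: "r = det4 v1 v3 v4 v5 *s v2 - det4 v2 v3 v4 v5 *s v1"
  shows "- det4 v1 v0 v2 q * det4 v0 p v3 r + det4 p v0 v2 q * det4 v0 v1 v3 r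
           = (det4 v0 v1 v2 v3)^2 *
             (det4 v0 v1 v2 v5 * det4 v0 v2 v3 v4 * det4 v1 v3 v4 v5
              - det4 v0 v1 v2 v4 * det4 v2 v3 v4 v5 * det4 v0 v1 v3 v5)
         \<and> (p \<noteq> 0 \<and> q \<noteq> 0 \<and> r \<noteq> 0 \<longrightarrow>
           (concurrent3 v1 p v2 q v3 r \<longleftrightarrow>
             det4 v0 v1 v2 v5 * det4 v0 v2 v3 v4 * det4 v1 v3 v4 v5
              - det4 v0 v1 v2 v4 * det4 v2 v3 v4 v5 * det4 v0 v1 v3 v5 = 0))"
proof -
  define D where "D = det4 v0 v1 v2 v3"
  define a where "a = det4 v0 v1 v2 v5"
  define b where "b = det4 v0 v1 v3 v5"
  define c where "c = det4 v0 v1 v2 v4"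
  define d where "d = det4 v0 v2 v3 v4"
  define e where "e = det4 v1 v3 v4 v5"
  define f where "f = det4 v2 v3 v4 v5"
  have pf: "p = a *s v3 + (-b) *s v2" unfolding p_def a_def b_def by (simp add: vec_eq_iff)
  have qf: "q = (-c) *s v3 + (-d) *s v1" unfolding q_def c_def d_def by (simp add: vec_eq_iff)
  have rf: "r = e *s v2 + (-f) *s v1" unfolding r_def e_def f_def by (simp add: vec_eq_iff)
  have s1: "det4 v1 v0 v2 v3 = - D" unfolding D_def by (rule sw12)
  have s2: "det4 v0 v2 v3 v1 = D" unfolding D_def using sw34[of v0 v2 v1 v3] sw23[of v0 v1 v2 v3] by simp
  have s3: "det4 v3 v0 v2 v1 = D"
    using sw12[of v0 v3 v2 v1] sw23[of v0 v2 v3 v1] s2 by simp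
  have s4: "det4 v0 v1 v3 v2 = - D" unfolding D_def by (rule sw34)
  have h1: "det4 v1 v0 v2 q = c * D" unfolding qf by (simp only: det4_ml s1) (simp add: algebra_simps)
  have h2: "det4 v0 p v3 r = b * f * D" unfolding pf rf by (simp only: det4_ml s2) (simp add: algebra_simps)
  have h3: "det4 p v0 v2 q = - a * d * D" unfolding pf qf by (simp only: det4_ml s3) (simp add: algebra_simps)
  have h4: "det4 v0 v1 v3 r = - e * D" unfolding rf by (simp only: det4_ml s4) (simp add: algebra_simps)
  have part1: "- det4 v1 v0 v2 q * det4 v0 p v3 r + det4 p v0 v2 q * det4 v0 v1 v3 r
           = D^2 * (a * d * e - c * f * b)"
    unfolding h1 h2 h3 h4 by (simp add: algebra_simps power2_eq_square)
  have "p \<noteq> 0 \<and> q \<noteq> 0 \<and> r \<noteq> 0 \<longrightarrow> (concurrent3 v1 p v2 q v3 r \<longleftrightarrow> a*d*e - c*f*b = 0)"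
    using part2[OF skew pf qf rf] by blast
  with part1 show ?thesis unfolding D_def a_def b_def c_def d_def e_def f_def by blast
qed

end
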